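(* Let $R=\mathbb C[T]$, $\tilde{\mathcal A}=R[u_k^{(i)}:i,k\in\mathbb Z_{\ge0}]$, and let $\mathcal A$ be the quotient differential algebra of $\tilde{\mathcal A}$ by the relations $u_0=1$ and, for every $r\in\mathbb Z_{\ge0}$, $$u_r=\sum_{k=0}^{r}\binom{T-k}{r-k}(-1)^ku_k^{(r-k)}$$ (equivalently, $L(\partial)=\sum_{k\ge0}u_k\partial^{T-k}$ satisfies $L^*=L$). Denote by $\bar u_{2m}$ the image of $u_{2m}$ in $\mathcal A$. Then the set $\{\bar u_{2m}^{(i)}:i\in\mathbb Z_{\ge0},\ m\in\mathbb Z_{>0}\}$ is algebraically independent over $\mathbb C[T]$.
   Context: $u_k^{(i)}$ denotes $\partial^iu_k$ in the differential polynomial algebra. Binomial coefficients over $\mathbb C[T]$: $\binom{x}{j}=x(x-1)\cdots(x-j+1)/j!$. The $T$-shifted adjoint of $L=\sum_ka_k\partial^{T-k}$ is $L^*=\sum_k(-1)^k\partial^{T-k}\circ a_k$, where $\partial^{T-k}\circ a=\sum_{\ell\ge0}\binom{T-k}{\ell}a^{(\ell)}\partial^{T-k-\ell}$. *)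

theory Defs
  imports "HOL-Library.Poly_Mapping" "HOL-Computational_Algebra.Polynomial" Complex_Main
begin

text \<open>Coefficient ring R = C[T]; T is the polynomial variable [:0,1:].
  The polynomial algebra over R in the variables u_k^(i), indexed by pairs (k,i),
  in the usual Poly_Mapping representation: monomials are exponent maps
  (nat \<times> nat) \<Rightarrow>0 nat, polynomials are finitely supported maps from monomials to R.\<close>

type_synonym Atil = "((nat \<times> nat, nat) poly_mapping, complex poly) poly_mapping"

definition constA :: "complex poly \<Rightarrow> Atil" where
  "constA c = Poly_Mapping.single 0 c"

definition uvar :: "nat \<Rightarrow> nat \<Rightarrow> Atil" where
  "uvar k i = Poly_Mapping.single (Poly_Mapping.single (k, i) 1) 1"

text \<open>The R-linear derivation with D(u_k^(i)) = u_k^(i+1) (and D T = 0),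
  written out on monomials by the Leibniz rule.\<close>
definition derA :: "Atil \<Rightarrow> Atil" where
  "derA p = (\<Sum>\<alpha>\<in>Poly_Mapping.keys p. \<Sum>v\<in>Poly_Mapping.keys \<alpha>.
      Poly_Mapping.single
        (\<alpha> - Poly_Mapping.single v 1 + Poly_Mapping.single (fst v, Suc (snd v)) 1)
        (Poly_Mapping.lookup p \<alpha> * of_nat (Poly_Mapping.lookup \<alpha> v)))"

definition binomT :: "complex poly \<Rightarrow> nat \<Rightarrow> complex poly" where
  "binomT x j = smult (1 / of_nat (fact j)) (\<Prod>l<j. x - of_nat l)"

definition selfadj_rel :: "nat \<Rightarrow> Atil" where
  "selfadj_rel r = uvar r 0 -
     (\<Sum>k\<le>r. constA (binomT ([:0,1:] - of_nat k) (r - k) * (-1) ^ k) * uvar k (r - k))"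

definition rels :: "Atil set" where
  "rels = insert (uvar 0 0 - 1) (range selfadj_rel)"

inductive_set dideal :: "Atil set \<Rightarrow> Atil set" for G where
  gen: "g \<in> G \<Longrightarrow> g \<in> dideal G"
| zero: "0 \<in> dideal G"
| add: "a \<in> dideal G \<Longrightarrow> b \<in> dideal G \<Longrightarrow> a + b \<in> dideal G"
| mult: "a \<in> dideal G \<Longrightarrow> c * a \<in> dideal G"
| der: "a \<in> dideal G \<Longrightarrow> derA a \<in> dideal G"

text \<open>Evaluation of a polynomial P over C[T] in variables y_(m,i) at y_(m,i) := u_{2m}^(i) in A-tilde.
  Then P(ubar_{2m}^(i)) = 0 in the quotient A iff this lies in dideal rels.\<close>
definition evalU :: "((nat \<times> nat, nat) poly_mapping, complex poly) poly_mapping \<Rightarrow> Atil" where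
  "evalU P = (\<Sum>\<alpha>\<in>Poly_Mapping.keys P. constA (Poly_Mapping.lookup P \<alpha>) *
       (\<Prod>v\<in>Poly_Mapping.keys \<alpha>. uvar (2 * fst v) (snd v) ^ Poly_Mapping.lookup \<alpha> v))"

end

theory Submission
  imports Defs
begin

lemma constA_add: "constA (a + b) = constA a + constA b"
  by (simp add: constA_def single_add)
lemma constA_mult: "constA (a * b) = constA a * constA b"
  by (simp add: constA_def mult_single)
lemma constA_0[simp]: "constA 0 = 0" by (simp add: constA_def)
lemma constA_1[simp]: "constA 1 = 1" by (simp add: constA_def)
lemma constA_sum: "constA (sum f A) = (\<Sum>x\<in>A. constA (f x))"
  by (induction A rule: infinite_finite_induct) (auto simp: constA_add)

lemma pm_expand: "(p :: 'a \<Rightarrow>\<^sub>0 'b::comm_monoid_add) = (\<Sum>\<alpha>\<in>Poly_Mapping.keys p. Poly_Mapping.single \<alpha> (Poly_Mapping.lookup p \<alpha>))"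
proof (rule poly_mapping_eqI)
  fix k
  show "Poly_Mapping.lookup p k = Poly_Mapping.lookup (\<Sum>\<alpha>\<in>Poly_Mapping.keys p. Poly_Mapping.single \<alpha> (Poly_Mapping.lookup p \<alpha>)) k"
    by (auto simp: lookup_sum lookup_single when_def in_keys_iff)
qed

definition monev :: "(nat \<times> nat \<Rightarrow> Atil) \<Rightarrow> (nat \<times> nat \<Rightarrow>\<^sub>0 nat) \<Rightarrow> Atil" where
  "monev \<sigma> \<alpha> = (\<Prod>v\<in>Poly_Mapping.keys \<alpha>. \<sigma> v ^ Poly_Mapping.lookup \<alpha> v)"

definition ev :: "(nat \<times> nat \<Rightarrow> Atil) \<Rightarrow> Atil \<Rightarrow> Atil" where
  "ev \<sigma> p = (\<Sum>\<alpha>\<in>Poly_Mapping.keys p. constA (Poly_Mapping.lookup p \<alpha>) * monev \<sigma> \<alpha>)"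

lemma monev_superset: "finite S \<Longrightarrow> Poly_Mapping.keys \<alpha> \<subseteq> S \<Longrightarrow>
   monev \<sigma> \<alpha> = (\<Prod>v\<in>S. \<sigma> v ^ Poly_Mapping.lookup \<alpha> v)"
  unfolding monev_def
  by (rule prod.mono_neutral_left) (auto simp: in_keys_iff)

lemma monev_add: "monev \<sigma> (\<alpha> + \<beta>) = monev \<sigma> \<alpha> * monev \<sigma> \<beta>"
proof -
  let ?S = "Poly_Mapping.keys \<alpha> \<union> Poly_Mapping.keys \<beta>"
  have "monev \<sigma> (\<alpha> + \<beta>) = (\<Prod>v\<in>?S. \<sigma> v ^ Poly_Mapping.lookup (\<alpha>+\<beta>) v)"
    by (rule monev_superset) (auto simp: keys_add)
  also have "\<dots> = (\<Prod>v\<in>?S. \<sigma> v ^ Poly_Mapping.lookup \<alpha> v) * (\<Prod>v\<in>?S. \<sigma> v ^ Poly_Mapping.lookup \<beta> v)"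
    by (simp add: lookup_add power_add prod.distrib)
  also have "\<dots> = monev \<sigma> \<alpha> * monev \<sigma> \<beta>"
    using monev_superset[of ?S \<alpha> \<sigma>] monev_superset[of ?S \<beta> \<sigma>] by simp
  finally show ?thesis .
qed

lemma monev_0[simp]: "monev \<sigma> 0 = 1" by (simp add: monev_def)
lemma monev_single1: "monev \<sigma> (Poly_Mapping.single v (1::nat)) = \<sigma> v" unfolding monev_def by simp

lemma ev_superset: "finite S \<Longrightarrow> Poly_Mapping.keys p \<subseteq> S \<Longrightarrow>
   ev \<sigma> p = (\<Sum>\<alpha>\<in>S. constA (Poly_Mapping.lookup p \<alpha>) * monev \<sigma> \<alpha>)"
  unfolding ev_def
  by (rule sum.mono_neutral_left) (auto simp: in_keys_iff)

lemma ev_add: "ev \<sigma> (p + q) = ev \<sigma> p + ev \<sigma> q"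
proof -
  let ?S = "Poly_Mapping.keys p \<union> Poly_Mapping.keys q"
  have "ev \<sigma> (p + q) = (\<Sum>\<alpha>\<in>?S. constA (Poly_Mapping.lookup (p+q) \<alpha>) * monev \<sigma> \<alpha>)"
    by (rule ev_superset) (auto simp: keys_add)
  also have "\<dots> = (\<Sum>\<alpha>\<in>?S. constA (Poly_Mapping.lookup p \<alpha>) * monev \<sigma> \<alpha>) + (\<Sum>\<alpha>\<in>?S. constA (Poly_Mapping.lookup q \<alpha>) * monev \<sigma> \<alpha>)"
    by (simp add: lookup_add constA_add distrib_right sum.distrib)
  also have "\<dots> = ev \<sigma> p + ev \<sigma> q"
    using ev_superset[of ?S p \<sigma>] ev_superset[of ?S q \<sigma>] by simp
  finally show ?thesis .
qed

lemma ev_0[simp]: "ev \<sigma> 0 = 0" by (simp add: ev_def)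
lemma ev_uminus: "ev \<sigma> (- p) = - ev \<sigma> p"
  using ev_add[of \<sigma> p "-p"] by (simp add: add.commute neg_eq_iff_add_eq_0[symmetric])
lemma ev_diff: "ev \<sigma> (p - q) = ev \<sigma> p - ev \<sigma> q"
  using ev_add[of \<sigma> p "-q"] by (simp add: ev_uminus)
lemma ev_sum: "ev \<sigma> (sum f A) = (\<Sum>x\<in>A. ev \<sigma> (f x))"
  by (induction A rule: infinite_finite_induct) (auto simp: ev_add)

lemma ev_single: "ev \<sigma> (Poly_Mapping.single \<alpha> c) = constA c * monev \<sigma> \<alpha>"
  by (cases "c = 0") (auto simp: ev_def)

lemma ev_mult: "ev \<sigma> (p * q) = ev \<sigma> p * ev \<sigma> q"
proof -
  have sm: "ev \<sigma> (Poly_Mapping.single \<alpha> a * Poly_Mapping.single \<beta> b) =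
      ev \<sigma> (Poly_Mapping.single \<alpha> a) * ev \<sigma> (Poly_Mapping.single \<beta> b)" for \<alpha> \<beta> a b
    by (simp add: mult_single ev_single constA_mult monev_add mult_ac)
  have "ev \<sigma> (p * q) = ev \<sigma> ((\<Sum>\<alpha>\<in>Poly_Mapping.keys p. Poly_Mapping.single \<alpha> (Poly_Mapping.lookup p \<alpha>)) *
      (\<Sum>\<beta>\<in>Poly_Mapping.keys q. Poly_Mapping.single \<beta> (Poly_Mapping.lookup q \<beta>)))"
    by (simp flip: pm_expand)
  also have "\<dots> = (\<Sum>\<alpha>\<in>Poly_Mapping.keys p. ev \<sigma> (Poly_Mapping.single \<alpha> (Poly_Mapping.lookup p \<alpha>))) *
      (\<Sum>\<beta>\<in>Poly_Mapping.keys q. ev \<sigma> (Poly_Mapping.single \<beta> (Poly_Mapping.lookup q \<beta>)))"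
    by (simp add: sum_distrib_left sum_distrib_right ev_sum sm)
  also have "\<dots> = ev \<sigma> p * ev \<sigma> q"
    by (simp flip: ev_sum pm_expand)
  finally show ?thesis .
qed

lemma ev_constA: "ev \<sigma> (constA c) = constA c" by (simp add: constA_def ev_single)
lemma ev_1[simp]: "ev \<sigma> 1 = 1" using ev_constA[of \<sigma> 1] by simp
lemma ev_uvar: "ev \<sigma> (uvar k i) = \<sigma> (k, i)"
  unfolding uvar_def ev_single monev_def by simp
lemma ev_power: "ev \<sigma> (x ^ n) = ev \<sigma> x ^ n"
  by (induction n) (auto simp: ev_mult)
lemma ev_prod: "ev \<sigma> (prod f A) = (\<Prod>x\<in>A. ev \<sigma> (f x))"
  by (induction A rule: infinite_finite_induct) (auto simp: ev_mult)


definition dmon :: "(nat \<times> nat \<Rightarrow>\<^sub>0 nat) \<Rightarrow> complex poly \<Rightarrow> Atil" where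
  "dmon \<alpha> c = (\<Sum>v\<in>Poly_Mapping.keys \<alpha>.
      Poly_Mapping.single (\<alpha> - Poly_Mapping.single v 1 + Poly_Mapping.single (fst v, Suc (snd v)) 1)
        (c * of_nat (Poly_Mapping.lookup \<alpha> v)))"

lemma derA_dmon: "derA p = (\<Sum>\<alpha>\<in>Poly_Mapping.keys p. dmon \<alpha> (Poly_Mapping.lookup p \<alpha>))"
  unfolding derA_def dmon_def ..

lemma dmon_0[simp]: "dmon \<alpha> 0 = 0" by (simp add: dmon_def)
lemma dmon_add: "dmon \<alpha> (a + b) = dmon \<alpha> a + dmon \<alpha> b"
  by (simp add: dmon_def distrib_right single_add sum.distrib)

lemma derA_superset: "finite S \<Longrightarrow> Poly_Mapping.keys p \<subseteq> S \<Longrightarrow>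
   derA p = (\<Sum>\<alpha>\<in>S. dmon \<alpha> (Poly_Mapping.lookup p \<alpha>))"
  unfolding derA_dmon
  by (rule sum.mono_neutral_left) (auto simp: in_keys_iff)

lemma derA_add: "derA (p + q) = derA p + derA q"
proof -
  let ?S = "Poly_Mapping.keys p \<union> Poly_Mapping.keys q"
  have "derA (p + q) = (\<Sum>\<alpha>\<in>?S. dmon \<alpha> (Poly_Mapping.lookup (p+q) \<alpha>))"
    by (rule derA_superset) (auto simp: keys_add)
  also have "\<dots> = (\<Sum>\<alpha>\<in>?S. dmon \<alpha> (Poly_Mapping.lookup p \<alpha>)) + (\<Sum>\<alpha>\<in>?S. dmon \<alpha> (Poly_Mapping.lookup q \<alpha>))"
    by (simp add: lookup_add dmon_add sum.distrib)
  also have "\<dots> = derA p + derA q"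
    using derA_superset[of ?S p] derA_superset[of ?S q] by simp
  finally show ?thesis .
qed

lemma derA_0[simp]: "derA 0 = 0" by (simp add: derA_def)
lemma derA_uminus: "derA (- p) = - derA p"
  using derA_add[of p "-p"] by (simp add: add.commute neg_eq_iff_add_eq_0[symmetric])
lemma derA_diff: "derA (p - q) = derA p - derA q"
  using derA_add[of p "-q"] by (simp add: derA_uminus)
lemma derA_sum: "derA (sum f A) = (\<Sum>x\<in>A. derA (f x))"
  by (induction A rule: infinite_finite_induct) (auto simp: derA_add)
lemma derA_single: "derA (Poly_Mapping.single \<alpha> c) = dmon \<alpha> c"
  by (cases "c = 0") (auto simp: derA_dmon)

lemma keys_add_nat: "Poly_Mapping.keys (\<alpha> + \<beta> :: 'a \<Rightarrow>\<^sub>0 nat) = Poly_Mapping.keys \<alpha> \<union> Poly_Mapping.keys \<beta>"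
  by (auto simp: in_keys_iff lookup_add)

lemma shift_eq:
  assumes "v \<in> Poly_Mapping.keys \<alpha>"
  shows "\<alpha> + \<beta> - Poly_Mapping.single v 1 + Poly_Mapping.single (fst v, Suc (snd v)) 1
     = (\<alpha> - Poly_Mapping.single v 1 + Poly_Mapping.single (fst v, Suc (snd v)) 1) + (\<beta> :: nat \<times> nat \<Rightarrow>\<^sub>0 nat)"
proof (rule poly_mapping_eqI)
  fix w
  have "Poly_Mapping.lookup \<alpha> v \<ge> 1" using assms by (simp add: in_keys_iff)
  then show "Poly_Mapping.lookup (\<alpha> + \<beta> - Poly_Mapping.single v 1 + Poly_Mapping.single (fst v, Suc (snd v)) 1) w =
    Poly_Mapping.lookup ((\<alpha> - Poly_Mapping.single v 1 + Poly_Mapping.single (fst v, Suc (snd v)) 1) + \<beta>) w"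
    by (cases "w = v") (auto simp: lookup_add lookup_minus lookup_single when_def)
qed

lemma dmon_mult_left:
  "dmon \<alpha> a * Poly_Mapping.single \<beta> b = (\<Sum>v\<in>Poly_Mapping.keys \<alpha>.
      Poly_Mapping.single (\<alpha> + \<beta> - Poly_Mapping.single v 1 + Poly_Mapping.single (fst v, Suc (snd v)) 1)
        (a * b * of_nat (Poly_Mapping.lookup \<alpha> v)))"
  unfolding dmon_def sum_distrib_right
proof (rule sum.cong)
  fix v assume v: "v \<in> Poly_Mapping.keys \<alpha>"
  show "Poly_Mapping.single (\<alpha> - Poly_Mapping.single v 1 + Poly_Mapping.single (fst v, Suc (snd v)) 1)
        (a * of_nat (Poly_Mapping.lookup \<alpha> v)) * Poly_Mapping.single \<beta> b =
      Poly_Mapping.single (\<alpha> + \<beta> - Poly_Mapping.single v 1 + Poly_Mapping.single (fst v, Suc (snd v)) 1)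
        (a * b * of_nat (Poly_Mapping.lookup \<alpha> v))"
    unfolding mult_single shift_eq[OF v] by (simp add: mult_ac)
qed simp

lemma dmon_leibniz:
  "dmon (\<alpha> + \<beta>) (a * b) = dmon \<alpha> a * Poly_Mapping.single \<beta> b + Poly_Mapping.single \<alpha> a * dmon \<beta> b"
proof -
  let ?K = "Poly_Mapping.keys (\<alpha> + \<beta>)"
  let ?t = "\<lambda>v. \<alpha> + \<beta> - Poly_Mapping.single v 1 + Poly_Mapping.single (fst v, Suc (snd v)) 1"
  have "dmon (\<alpha> + \<beta>) (a * b) = (\<Sum>v\<in>?K. Poly_Mapping.single (?t v) (a * b * of_nat (Poly_Mapping.lookup \<alpha> v)))
     + (\<Sum>v\<in>?K. Poly_Mapping.single (?t v) (a * b * of_nat (Poly_Mapping.lookup \<beta> v)))"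
    unfolding dmon_def by (simp add: lookup_add distrib_left single_add sum.distrib)
  also have "(\<Sum>v\<in>?K. Poly_Mapping.single (?t v) (a * b * of_nat (Poly_Mapping.lookup \<alpha> v)))
     = (\<Sum>v\<in>Poly_Mapping.keys \<alpha>. Poly_Mapping.single (?t v) (a * b * of_nat (Poly_Mapping.lookup \<alpha> v)))"
    by (rule sum.mono_neutral_right) (auto simp: keys_add_nat in_keys_iff)
  also have "\<dots> = dmon \<alpha> a * Poly_Mapping.single \<beta> b" by (simp add: dmon_mult_left)
  also have "(\<Sum>v\<in>?K. Poly_Mapping.single (?t v) (a * b * of_nat (Poly_Mapping.lookup \<beta> v)))
     = (\<Sum>v\<in>Poly_Mapping.keys \<beta>. Poly_Mapping.single (?t v) (a * b * of_nat (Poly_Mapping.lookup \<beta> v)))"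
    by (rule sum.mono_neutral_right) (auto simp: keys_add_nat in_keys_iff)
  also have "\<dots> = dmon \<beta> b * Poly_Mapping.single \<alpha> a"
    unfolding dmon_mult_left[of \<beta> b \<alpha> a] add.commute[of \<beta> \<alpha>] mult.commute[of b a] ..
  finally show ?thesis by (simp only: mult.commute[of "dmon \<beta> b"])
qed

lemma derA_mult: "derA (p * q) = derA p * q + p * derA q"
proof -
  let ?P = "\<lambda>\<alpha>. Poly_Mapping.single \<alpha> (Poly_Mapping.lookup p \<alpha>)"
  let ?Q = "\<lambda>\<beta>. Poly_Mapping.single \<beta> (Poly_Mapping.lookup q \<beta>)"
  have sm: "derA (?P \<alpha> * ?Q \<beta>) = derA (?P \<alpha>) * ?Q \<beta> + ?P \<alpha> * derA (?Q \<beta>)" for \<alpha> \<beta>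
    by (simp add: mult_single derA_single dmon_leibniz)
  have "derA (p * q) = derA ((\<Sum>\<alpha>\<in>Poly_Mapping.keys p. ?P \<alpha>) * (\<Sum>\<beta>\<in>Poly_Mapping.keys q. ?Q \<beta>))"
    by (simp flip: pm_expand)
  also have "\<dots> = (\<Sum>\<alpha>\<in>Poly_Mapping.keys p. \<Sum>\<beta>\<in>Poly_Mapping.keys q. derA (?P \<alpha>) * ?Q \<beta> + ?P \<alpha> * derA (?Q \<beta>))"
    by (simp add: sum_product derA_sum sm)
  also have "\<dots> = derA (\<Sum>\<alpha>\<in>Poly_Mapping.keys p. ?P \<alpha>) * (\<Sum>\<beta>\<in>Poly_Mapping.keys q. ?Q \<beta>)
       + (\<Sum>\<alpha>\<in>Poly_Mapping.keys p. ?P \<alpha>) * derA (\<Sum>\<beta>\<in>Poly_Mapping.keys q. ?Q \<beta>)"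
    by (simp add: sum.distrib sum_product derA_sum)
  also have "\<dots> = derA p * q + p * derA q" by (simp flip: pm_expand)
  finally show ?thesis .
qed

lemma derA_constA: "derA (constA c) = 0"
  by (cases "c = 0") (auto simp: constA_def derA_dmon dmon_def)

lemma derA_cmult: "derA (constA c * p) = constA c * derA p"
  by (simp add: derA_mult derA_constA)

lemma derA_uvar: "derA (uvar k i) = uvar k (Suc i)"
  by (simp add: uvar_def derA_single dmon_def)


definition degm :: "(nat \<times> nat \<Rightarrow>\<^sub>0 nat) \<Rightarrow> nat" where
  "degm \<alpha> = sum (Poly_Mapping.lookup \<alpha>) (Poly_Mapping.keys \<alpha>)"

lemma degm_superset: "finite S \<Longrightarrow> Poly_Mapping.keys \<alpha> \<subseteq> S \<Longrightarrow> degm \<alpha> = sum (Poly_Mapping.lookup \<alpha>) S"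
  unfolding degm_def by (rule sum.mono_neutral_left) (auto simp: in_keys_iff)

lemma degm_add: "degm (\<alpha> + \<beta>) = degm \<alpha> + degm \<beta>"
proof -
  let ?S = "Poly_Mapping.keys \<alpha> \<union> Poly_Mapping.keys \<beta>"
  have "degm (\<alpha> + \<beta>) = sum (Poly_Mapping.lookup (\<alpha> + \<beta>)) ?S"
    by (rule degm_superset) (auto simp: keys_add_nat)
  also have "\<dots> = sum (Poly_Mapping.lookup \<alpha>) ?S + sum (Poly_Mapping.lookup \<beta>) ?S"
    by (simp add: lookup_add sum.distrib)
  also have "\<dots> = degm \<alpha> + degm \<beta>"
    using degm_superset[of ?S \<alpha>] degm_superset[of ?S \<beta>] by simp
  finally show ?thesis .
qed

lemma degm_single1: "degm (Poly_Mapping.single v 1) = 1" by (simp add: degm_def)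

lemma split_mon: "v \<in> Poly_Mapping.keys \<alpha> \<Longrightarrow> \<alpha> = (\<alpha> - Poly_Mapping.single v 1) + Poly_Mapping.single v (1::nat)"
  by (rule poly_mapping_eqI) (auto simp: lookup_add lookup_minus lookup_single when_def in_keys_iff)

lemma derA_1[simp]: "derA 1 = 0" using derA_constA[of 1] by simp

lemma ev_derA_mon:
  assumes h\<sigma>: "\<And>k i. \<sigma> (k, Suc i) = derA (\<sigma> (k, i))"
  shows "ev \<sigma> (derA (Poly_Mapping.single \<alpha> 1)) = derA (monev \<sigma> \<alpha>)"
proof (induction "degm \<alpha>" arbitrary: \<alpha>)
  case 0
  then have "\<forall>v\<in>Poly_Mapping.keys \<alpha>. Poly_Mapping.lookup \<alpha> v = 0" by (simp add: degm_def)
  then have "\<alpha> = 0" by (metis in_keys_iff keys_eq_empty ex_in_conv)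
  then show ?case by (simp add: derA_single dmon_def)
next
  case (Suc n)
  then have "\<alpha> \<noteq> 0" by (auto simp: degm_def)
  then obtain v where v: "v \<in> Poly_Mapping.keys \<alpha>" by (metis keys_eq_empty ex_in_conv)
  define \<beta> where "\<beta> = \<alpha> - Poly_Mapping.single v 1"
  have a: "\<alpha> = \<beta> + Poly_Mapping.single v 1" unfolding \<beta>_def using split_mon[OF v] .
  have "degm \<alpha> = degm \<beta> + 1" using a degm_add degm_single1 by metis
  then have IH: "ev \<sigma> (derA (Poly_Mapping.single \<beta> 1)) = derA (monev \<sigma> \<beta>)" using Suc by simp
  obtain k i where vki: "v = (k, i)" by (cases v)
  have sa: "Poly_Mapping.single \<alpha> 1 = Poly_Mapping.single \<beta> 1 * uvar k i"
    by (simp add: a uvar_def mult_single vki)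
  have "ev \<sigma> (derA (Poly_Mapping.single \<alpha> 1)) =
      ev \<sigma> (derA (Poly_Mapping.single \<beta> 1)) * \<sigma> (k, i) + monev \<sigma> \<beta> * \<sigma> (k, Suc i)"
    by (simp add: sa derA_mult derA_uvar ev_add ev_mult ev_uvar ev_single)
  also have "\<dots> = derA (monev \<sigma> \<beta> * \<sigma> (k, i))"
    by (simp add: IH h\<sigma> derA_mult)
  also have "monev \<sigma> \<beta> * \<sigma> (k, i) = monev \<sigma> \<alpha>"
    by (simp add: a monev_add vki) (simp add: monev_def)
  finally show ?case .
qed

lemma ev_derA:
  assumes h\<sigma>: "\<And>k i. \<sigma> (k, Suc i) = derA (\<sigma> (k, i))"
  shows "ev \<sigma> (derA p) = derA (ev \<sigma> p)"
proof -
  have s: "ev \<sigma> (derA (Poly_Mapping.single \<alpha> c)) = derA (ev \<sigma> (Poly_Mapping.single \<alpha> c))" for \<alpha> c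
  proof -
    have e: "Poly_Mapping.single \<alpha> c = constA c * Poly_Mapping.single \<alpha> 1"
      by (simp add: constA_def mult_single)
    show ?thesis
      unfolding e by (simp add: derA_cmult ev_mult ev_constA ev_derA_mon[OF h\<sigma>] ev_single)
  qed
  show ?thesis
    by (subst (1 2) pm_expand) (simp add: derA_sum ev_sum s)
qed


definition bc :: "nat \<Rightarrow> nat \<Rightarrow> complex poly" where
  "bc k r = binomT ([:0,1:] - of_nat k) (r - k) * (-1) ^ k"

function w :: "nat \<Rightarrow> Atil" where
  "w r = (if r = 0 then 1 else if even r then uvar r 0 else
     constA [:1/2:] * (\<Sum>k<r. constA (bc k r) * (derA ^^ (r - k)) (w k)))"
  by auto
termination by (relation "measure id") auto

lemma prod_split: "(\<Prod>l<j+m. f l) = (\<Prod>l<j. f l) * (\<Prod>l<m. f (j+l))" for f :: "nat \<Rightarrow> 'a::comm_monoid_mult"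
  by (induction m) (auto simp: mult_ac)

lemma binomT_mult:
  assumes "j \<le> n"
  shows "binomT x j * binomT (x - of_nat j) (n - j) = of_nat (n choose j) * binomT x n"
proof -
  obtain m where n: "n = j + m" using assms le_Suc_ex by blast
  have p: "(\<Prod>l<n. x - of_nat l) = (\<Prod>l<j. x - of_nat l) * (\<Prod>l<m. x - of_nat j - of_nat l)"
    unfolding n prod_split by (simp add: algebra_simps)
  have c: "(1 / fact j) * (1 / fact m) = (of_nat (n choose j) :: complex) * (1 / fact n)"
    using binomial_fact[OF assms, where 'a=complex] n by (simp add: field_simps)
  show ?thesis
    unfolding binomT_def p using c n
    by (simp add: mult_smult_left mult_smult_right of_nat_poly smult_smult mult_ac)
qed

lemma bc_sum:
  assumes "k \<le> s"
  shows "(\<Sum>r\<le>s. if k \<le> r then bc r s * bc k r else 0) = (if k = s then 1 else 0)"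
proof -
  obtain n where s: "s = k + n" using assms le_Suc_ex by blast
  let ?x = "[:0,1:] - of_nat k :: complex poly"
  have "(\<Sum>r\<le>s. if k \<le> r then bc r s * bc k r else 0) = (\<Sum>r\<in>{k..s}. bc r s * bc k r)"
    by (rule sum.mono_neutral_cong_right) auto
  also have "\<dots> = (\<Sum>j\<in>{0..n}. bc (j + k) s * bc k (j + k))"
    using sum.shift_bounds_cl_nat_ivl[of "\<lambda>r. bc r s * bc k r" 0 k n] s by (simp add: add.commute)
  also have "\<dots> = (\<Sum>j\<in>{0..n}. binomT ?x n * ((-1) ^ j * of_nat (n choose j)))"
  proof (rule sum.cong)
    fix j assume "j \<in> {0..n}"
    then have jn: "j \<le> n" by simp
    have e1: "[:0,1:] - of_nat (j + k) = ?x - of_nat j" by simp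
    have e2: "s - (j + k) = n - j" using s by simp
    have "bc (j + k) s * bc k (j + k) = (binomT ?x j * binomT (?x - of_nat j) (n - j)) * ((-1) ^ (j + k) * (-1) ^ k)"
      unfolding bc_def e1 e2 by (simp add: mult_ac)
    also have "(-1) ^ (j + k) * (-1) ^ k = ((-1) ^ j :: complex poly)"
      by (simp add: power_add mult.assoc flip: power_add) (simp add: power_add flip: mult_2 power_mult)
    finally show "bc (j + k) s * bc k (j + k) = binomT ?x n * ((-1) ^ j * of_nat (n choose j))"
      using binomT_mult[OF jn, of ?x] by (simp add: mult_ac)
  qed simp
  also have "\<dots> = binomT ?x n * (\<Sum>j\<le>n. (-1) ^ j * of_nat (n choose j))"
    by (simp add: sum_distrib_left atLeast0AtMost)
  also have "\<dots> = (if k = s then 1 else 0)"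
  proof (cases "n = 0")
    case True then show ?thesis using s by (simp add: binomT_def)
  next
    case False then show ?thesis using s choose_alternating_sum[of n, where 'a="complex poly"] by simp
  qed
  finally show ?thesis .
qed


declare w.simps[simp del]

abbreviation Dn :: "nat \<Rightarrow> Atil \<Rightarrow> Atil" where "Dn n \<equiv> derA ^^ n"

lemma Dn_add: "Dn n (x + y) = Dn n x + Dn n y" by (induction n) (auto simp: derA_add)
lemma Dn_0: "Dn n 0 = 0" by (induction n) auto
lemma Dn_diff: "Dn n (x - y) = Dn n x - Dn n y" by (induction n) (auto simp: derA_diff)
lemma Dn_cmult: "Dn n (constA c * x) = constA c * Dn n x" by (induction n) (auto simp: derA_cmult)
lemma Dn_sum: "Dn n (sum f A) = (\<Sum>x\<in>A. Dn n (f x))"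
  by (induction A rule: infinite_finite_induct) (auto simp: Dn_add Dn_0)
lemma Dn_comp: "Dn m (Dn n x) = Dn (m + n) x" by (simp add: funpow_add)

definition cc :: "(nat \<Rightarrow> Atil) \<Rightarrow> nat \<Rightarrow> Atil" where
  "cc a r = a r - (\<Sum>k\<le>r. constA (bc k r) * Dn (r - k) (a k))"

lemma double_sum:
  "(\<Sum>r\<le>s. \<Sum>k\<le>r. constA (bc r s) * (constA (bc k r) * Dn (s - k) (a k))) = a s"
proof -
  let ?X = "\<lambda>k. Dn (s - k) (a k)"
  have "(\<Sum>r\<le>s. \<Sum>k\<le>r. constA (bc r s) * (constA (bc k r) * ?X k))
      = (\<Sum>r\<le>s. \<Sum>k\<le>s. constA (if k \<le> r then bc r s * bc k r else 0) * ?X k)"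
  proof (rule sum.cong)
    fix r assume "r \<in> {..s}"
    then show "(\<Sum>k\<le>r. constA (bc r s) * (constA (bc k r) * ?X k))
      = (\<Sum>k\<le>s. constA (if k \<le> r then bc r s * bc k r else 0) * ?X k)"
      by (intro sum.mono_neutral_cong_left) (auto simp: constA_mult mult_ac)
  qed simp
  also have "\<dots> = (\<Sum>k\<le>s. \<Sum>r\<le>s. constA (if k \<le> r then bc r s * bc k r else 0) * ?X k)"
    by (rule sum.swap)
  also have "\<dots> = (\<Sum>k\<le>s. constA (\<Sum>r\<le>s. if k \<le> r then bc r s * bc k r else 0) * ?X k)"
    by (simp add: constA_sum sum_distrib_right)
  also have "\<dots> = (\<Sum>k\<le>s. if k = s then ?X k else 0)"
    by (rule sum.cong) (auto simp: bc_sum)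
  also have "\<dots> = a s" by simp
  finally show ?thesis .
qed

lemma cc_identity:
  "(\<Sum>r\<le>s. constA (bc r s) * Dn (s - r) (cc a r)) = - cc a s"
proof -
  have "(\<Sum>r\<le>s. constA (bc r s) * Dn (s - r) (cc a r)) =
     (\<Sum>r\<le>s. constA (bc r s) * Dn (s - r) (a r)) -
     (\<Sum>r\<le>s. \<Sum>k\<le>r. constA (bc r s) * (constA (bc k r) * Dn (s - k) (a k)))"
    unfolding sum_subtractf[symmetric]
  proof (rule sum.cong)
    fix r assume r: "r \<in> {..s}"
    have "Dn (s - r) (cc a r) = Dn (s - r) (a r) - (\<Sum>k\<le>r. constA (bc k r) * Dn (s - k) (a k))"
      unfolding cc_def Dn_diff Dn_sum Dn_cmult Dn_comp
      using r by (intro arg_cong2[where f="(-)"] refl sum.cong) auto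
    then show "constA (bc r s) * Dn (s - r) (cc a r) =
      constA (bc r s) * Dn (s - r) (a r) - (\<Sum>k\<le>r. constA (bc r s) * (constA (bc k r) * Dn (s - k) (a k)))"
      by (simp add: right_diff_distrib sum_distrib_left)
  qed simp
  also have "\<dots> = - cc a s"
    unfolding double_sum cc_def by simp
  finally show ?thesis .
qed

lemma half_half: "constA [:1/2:] * (x + x) = x"
proof -
  have "constA [:1/2:] * (x + x) = (constA [:1/2:] + constA [:1/2:]) * x" by (simp add: algebra_simps)
  also have "constA [:1/2:] + constA [:1/2:] = 1"
  proof -
    have "[:1/2:] + [:1/2:] = (1::complex poly)" by (simp add: one_pCons)
    then show ?thesis by (metis constA_add constA_1)
  qed
  finally show ?thesis by simp
qed

lemma bc_diag: "bc r r = (-1) ^ r" by (simp add: bc_def binomT_def)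

lemma cc_w: "cc w s = 0"
proof (induction s rule: less_induct)
  case (less s)
  show ?case
  proof (cases "odd s")
    case True
    then have s0: "s \<noteq> 0" by (cases s) auto
    let ?S = "\<Sum>k<s. constA (bc k s) * Dn (s - k) (w k)"
    have ws: "w s = constA [:1/2:] * ?S" using True s0 by (subst w.simps) simp
    have "{..s} = insert s {..<s}" by auto
    then have "cc w s = w s - (constA (bc s s) * w s + ?S)"
      unfolding cc_def by simp
    also have "constA (bc s s) = - 1" using True by (simp add: bc_diag constA_def single_uminus)
    finally have "cc w s = (w s + w s) - ?S" by simp
    also have "w s + w s = ?S" using half_half[of ?S] ws by (simp add: algebra_simps)
    finally show ?thesis by simp
  next
    case False
    have "{..s} = insert s {..<s}" by auto
    then have "- cc w s = constA (bc s s) * cc w s + (\<Sum>r<s. constA (bc r s) * Dn (s - r) (cc w r))"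
      using cc_identity[of s w] by simp
    also have "(\<Sum>r<s. constA (bc r s) * Dn (s - r) (cc w r)) = 0"
      using less by (simp add: Dn_0)
    also have "constA (bc s s) = 1" using False by (simp add: bc_diag)
    finally have "cc w s + cc w s = 0" by (simp add: eq_neg_iff_add_eq_0)
    then show ?thesis using half_half[of "cc w s"] by simp
  qed
qed


definition sig :: "nat \<times> nat \<Rightarrow> Atil" where "sig v = Dn (snd v) (w (fst v))"

lemma sig_Suc: "sig (k, Suc i) = derA (sig (k, i))" by (simp add: sig_def)

lemma Dn_uvar: "Dn i (uvar k 0) = uvar k i" by (induction i) (auto simp: derA_uvar)

lemma ev_rels: "g \<in> rels \<Longrightarrow> ev sig g = 0"
proof (unfold rels_def, elim insertE rangeE)
  assume "g = uvar 0 0 - 1"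
  then show ?thesis by (simp add: ev_diff ev_uvar sig_def w.simps)
next
  fix r assume g: "g = selfadj_rel r"
  have "ev sig g = w r - (\<Sum>k\<le>r. constA (bc k r) * Dn (r - k) (w k))"
    unfolding g selfadj_rel_def
    by (simp add: ev_diff ev_sum ev_mult ev_constA ev_uvar sig_def bc_def)
  then show ?thesis using cc_w[of r] by (simp add: cc_def)
qed

lemma ev_dideal: "a \<in> dideal rels \<Longrightarrow> ev sig a = 0"
proof (induction rule: dideal.induct)
  case (gen g) then show ?case by (rule ev_rels)
next
  case zero then show ?case by simp
next
  case (add a b) then show ?case by (simp add: ev_add)
next
  case (mult a c) then show ?case by (simp add: ev_mult)
next
  case (der a) then show ?case by (simp add: ev_derA sig_Suc)
qed

lemma ev_evalU:
  assumes "\<forall>\<alpha>\<in>Poly_Mapping.keys P. \<forall>v\<in>Poly_Mapping.keys \<alpha>. 0 < fst v"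
  shows "ev sig (evalU P) = evalU P"
  unfolding evalU_def ev_sum
proof (rule sum.cong)
  fix \<alpha> assume a: "\<alpha> \<in> Poly_Mapping.keys P"
  have "sig (2 * fst v, snd v) = uvar (2 * fst v) (snd v)" if "v \<in> Poly_Mapping.keys \<alpha>" for v
  proof -
    have "0 < fst v" using assms a that by blast
    then show ?thesis by (simp add: sig_def w.simps Dn_uvar)
  qed
  then show "ev sig (constA (Poly_Mapping.lookup P \<alpha>) *
          (\<Prod>v\<in>Poly_Mapping.keys \<alpha>. uvar (2 * fst v) (snd v) ^ Poly_Mapping.lookup \<alpha> v)) =
        constA (Poly_Mapping.lookup P \<alpha>) *
          (\<Prod>v\<in>Poly_Mapping.keys \<alpha>. uvar (2 * fst v) (snd v) ^ Poly_Mapping.lookup \<alpha> v)"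
    by (simp add: ev_mult ev_constA ev_prod ev_power ev_uvar)
qed simp

definition gg :: "nat \<times> nat \<Rightarrow> nat \<times> nat" where "gg v = (2 * fst v, snd v)"
definition mu :: "(nat \<times> nat \<Rightarrow>\<^sub>0 nat) \<Rightarrow> (nat \<times> nat \<Rightarrow>\<^sub>0 nat)" where
  "mu \<alpha> = (\<Sum>v\<in>Poly_Mapping.keys \<alpha>. Poly_Mapping.single (gg v) (Poly_Mapping.lookup \<alpha> v))"

lemma single_pow: "(Poly_Mapping.single (Poly_Mapping.single u (1::nat)) (1::complex poly)) ^ n
    = Poly_Mapping.single (Poly_Mapping.single u n) 1"
  by (induction n) (auto simp: mult_single single_add[symmetric] add.commute)

lemma prod_single: "(\<Prod>v\<in>A. Poly_Mapping.single (f v) (1::complex poly)) = Poly_Mapping.single (\<Sum>v\<in>A. f v) 1"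
  by (induction A rule: infinite_finite_induct) (auto simp: mult_single)

lemma lookup_mu: "Poly_Mapping.lookup (mu \<alpha>) (gg u) = Poly_Mapping.lookup \<alpha> u"
proof -
  have "Poly_Mapping.lookup (mu \<alpha>) (gg u) = (\<Sum>v\<in>Poly_Mapping.keys \<alpha>. if v = u then Poly_Mapping.lookup \<alpha> v else 0)"
    unfolding mu_def lookup_sum
    by (rule sum.cong) (auto simp: lookup_single when_def gg_def prod_eq_iff)
  also have "\<dots> = Poly_Mapping.lookup \<alpha> u" by (simp add: in_keys_iff)
  finally show ?thesis .
qed

lemma mu_inj: "mu \<alpha> = mu \<beta> \<Longrightarrow> \<alpha> = \<beta>"
  by (rule poly_mapping_eqI) (metis lookup_mu)

lemma evalU_mu: "evalU P = (\<Sum>\<alpha>\<in>Poly_Mapping.keys P. Poly_Mapping.single (mu \<alpha>) (Poly_Mapping.lookup P \<alpha>))"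
  unfolding evalU_def
proof (rule sum.cong)
  fix \<alpha>
  have "(\<Prod>v\<in>Poly_Mapping.keys \<alpha>. uvar (2 * fst v) (snd v) ^ Poly_Mapping.lookup \<alpha> v)
     = Poly_Mapping.single (mu \<alpha>) 1"
    unfolding uvar_def single_pow prod_single mu_def gg_def ..
  then show "constA (Poly_Mapping.lookup P \<alpha>) *
       (\<Prod>v\<in>Poly_Mapping.keys \<alpha>. uvar (2 * fst v) (snd v) ^ Poly_Mapping.lookup \<alpha> v) =
     Poly_Mapping.single (mu \<alpha>) (Poly_Mapping.lookup P \<alpha>)"
    by (simp add: constA_def mult_single)
qed simp

lemma evalU_inj: assumes "evalU P = 0" shows "P = 0"
proof -
  have "Poly_Mapping.lookup P \<beta> = 0" if b: "\<beta> \<in> Poly_Mapping.keys P" for \<beta>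
  proof -
    have "0 = Poly_Mapping.lookup (evalU P) (mu \<beta>)" using assms by simp
    also have "\<dots> = (\<Sum>\<alpha>\<in>Poly_Mapping.keys P. if \<alpha> = \<beta> then Poly_Mapping.lookup P \<alpha> else 0)"
      unfolding evalU_mu lookup_sum
      by (rule sum.cong) (auto simp: lookup_single when_def dest: mu_inj)
    also have "\<dots> = Poly_Mapping.lookup P \<beta>" using b by simp
    finally show ?thesis by simp
  qed
  then show ?thesis by (metis in_keys_iff keys_eq_empty ex_in_conv)
qed

theorem mainTheorem20:
  fixes P :: "((nat \<times> nat, nat) poly_mapping, complex poly) poly_mapping"
  assumes "\<forall>\<alpha>\<in>Poly_Mapping.keys P. \<forall>v\<in>Poly_Mapping.keys \<alpha>. 0 < fst v"
    and "evalU P \<in> dideal rels"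
  shows "P = 0"
proof -
  have "evalU P = 0" using ev_dideal[OF assms(2)] ev_evalU[OF assms(1)] by simp
  then show ?thesis by (rule evalU_inj)
qed

end
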